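(* Let $G$ and $H$ be graphs without isolated vertices. If $K_2\times G$ and $K_2\times H$ are isomorphic as graphs, then the neighborhood complexes $N(G)$ and $N(H)$ are isomorphic as simplicial complexes. If moreover $G$ and $H$ are locally finite and stiff, then conversely $N(G)\cong N(H)$ implies $K_2\times G\cong K_2\times H$.
   Context: A graph $G$ is a set $V(G)$ together with a symmetric subset $E(G) \subset V(G)\times V(G)$ (undirected, no multiple edges, loops allowed; graphs may be infinite). For $v \in V(G)$, $N(v)=\{w : (v,w)\in E(G)\}$; $v$ is isolated if $N(v)=\emptyset$. $G$ is locally finite if every $N(v)$ is finite. $G$ is stiff if for vertices $v,w$, $N(v)\subset N(w)$ implies $v=w$. $K_2$ is the graph with $V(K_2)=\{1,2\}$ and edges $(1,2),(2,1)$. The tensor product $G\times H$ has vertex set $V(G)\times V(H)$, with $((x,y),(x',y'))$ an edge iff $(x,x')\in E(G)$ and $(y,y')\in E(H)$. The neighborhood complex $N(G)$ is the abstract simplicial complex whose vertices are the non-isolated vertices of $G$ and whose simplices are the finite subsets contained in $N(v)$ for some vertex $v$. *)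

theory Defs
  imports Main
begin

text \<open>A graph is a pair (V, E) with E a symmetric subset of V \<times> V
  (undirected, loops allowed, possibly infinite).\<close>
type_synonym 'a graph = "'a set \<times> ('a \<times> 'a) set"

definition verts :: "'a graph \<Rightarrow> 'a set" where "verts G = fst G"
definition edges :: "'a graph \<Rightarrow> ('a \<times> 'a) set" where "edges G = snd G"

definition is_graph :: "'a graph \<Rightarrow> bool" where
  "is_graph G \<longleftrightarrow> edges G \<subseteq> verts G \<times> verts G \<and> sym (edges G)"

definition nbhd :: "'a graph \<Rightarrow> 'a \<Rightarrow> 'a set" where
  "nbhd G v = {w. (v, w) \<in> edges G}"

definition isolated :: "'a graph \<Rightarrow> 'a \<Rightarrow> bool" where
  "isolated G v \<longleftrightarrow> nbhd G v = {}"

definition no_isolated :: "'a graph \<Rightarrow> bool" where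
  "no_isolated G \<longleftrightarrow> (\<forall>v\<in>verts G. \<not> isolated G v)"

definition locally_finite :: "'a graph \<Rightarrow> bool" where
  "locally_finite G \<longleftrightarrow> (\<forall>v\<in>verts G. finite (nbhd G v))"

definition stiff :: "'a graph \<Rightarrow> bool" where
  "stiff G \<longleftrightarrow> (\<forall>v\<in>verts G. \<forall>w\<in>verts G. nbhd G v \<subseteq> nbhd G w \<longrightarrow> v = w)"

definition K2 :: "nat graph" where
  "K2 = ({1, 2}, {(1, 2), (2, 1)})"

definition tensor :: "'a graph \<Rightarrow> 'b graph \<Rightarrow> ('a \<times> 'b) graph" where
  "tensor G H = (verts G \<times> verts H,
     {((x, y), (x', y')). (x, x') \<in> edges G \<and> (y, y') \<in> edges H})"

definition graph_iso :: "'a graph \<Rightarrow> 'b graph \<Rightarrow> bool" where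
  "graph_iso G H \<longleftrightarrow> (\<exists>f. bij_betw f (verts G) (verts H) \<and>
     (\<forall>x\<in>verts G. \<forall>y\<in>verts G. (x, y) \<in> edges G \<longleftrightarrow> (f x, f y) \<in> edges H))"

type_synonym 'a complex = "'a set \<times> 'a set set"

definition cverts :: "'a complex \<Rightarrow> 'a set" where "cverts K = fst K"
definition simplices :: "'a complex \<Rightarrow> 'a set set" where "simplices K = snd K"

definition nbhd_complex :: "'a graph \<Rightarrow> 'a complex" where
  "nbhd_complex G = ({v \<in> verts G. \<not> isolated G v},
     {S. finite S \<and> (\<exists>v\<in>verts G. S \<subseteq> nbhd G v)})"

definition complex_iso :: "'a complex \<Rightarrow> 'b complex \<Rightarrow> bool" where
  "complex_iso K L \<longleftrightarrow> (\<exists>f. bij_betw f (cverts K) (cverts L) \<and>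
     (\<forall>S. S \<subseteq> cverts K \<longrightarrow> (S \<in> simplices K \<longleftrightarrow> f ` S \<in> simplices L)))"

end

theory Submission
  imports Defs
begin
lemma canc_inf:
  assumes "infinite C" "A1 \<union> A2 = C" "bij_betw h A1 A2"
  shows "(card_of A1, card_of C) \<in> ordIso"
proof -
  have i1: "infinite A1"
  proof
    assume f1: "finite A1"
    hence "finite A2" using bij_betw_finite[OF assms(3)] by simp
    hence "finite C" using f1 assms(2) by auto
    thus False using assms(1) by simp
  qed
  have "(card_of A1, card_of A2) \<in> ordIso" by (rule card_of_ordIsoI[OF assms(3)])
  hence "(card_of A2, card_of A1) \<in> ordIso" by (rule ordIso_symmetric)
  hence l2: "(card_of A2, card_of A1) \<in> ordLeq" by (rule ordIso_imp_ordLeq)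
  have l3: "(card_of C, card_of (A1 <+> A2)) \<in> ordLeq" using card_of_Un_Plus_ordLeq[of A1 A2] assms(2) by simp
  have l4: "(card_of (A1 <+> A2), card_of A1) \<in> ordIso" by (rule card_of_Plus_infinite1[OF i1 l2])
  have l5: "(card_of C, card_of A1) \<in> ordLeq" by (rule ordLeq_ordIso_trans[OF l3 l4])
  have l6: "(card_of A1, card_of C) \<in> ordLeq" using card_of_mono1[of A1 C] assms(2) by auto
  show ?thesis using l5 l6 ordIso_iff_ordLeq[of "card_of A1" "card_of C"] by simp
qed

lemma canc:
  assumes "A1 \<inter> A2 = {}" "A1 \<union> A2 = C" "bij_betw h A1 A2"
      and "B1 \<inter> B2 = {}" "B1 \<union> B2 = C" "bij_betw k B1 B2"
  shows "\<exists>g. bij_betw g A1 B1"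
proof (cases "finite C")
  case True
  have "finite (A1 \<union> A2)" "finite (B1 \<union> B2)" using True assms(2,5) by simp_all
  hence fa: "finite A1" "finite A2" "finite B1" "finite B2" by simp_all
  have "card C = card A1 + card A2" using card_Un_disjoint[OF fa(1,2) assms(1)] assms(2) by simp
  moreover have "card C = card B1 + card B2" using card_Un_disjoint[OF fa(3,4) assms(4)] assms(5) by simp
  moreover have "card A1 = card A2" using assms(3) bij_betw_same_card by blast
  moreover have "card B1 = card B2" using assms(6) bij_betw_same_card by blast
  ultimately have "card A1 = card B1" by simp
  then show ?thesis using finite_same_card_bij[OF fa(1,3)] by simp
next
  case False
  have c1: "(card_of A1, card_of C) \<in> ordIso" using canc_inf[OF False assms(2,3)] .
  have c2: "(card_of B1, card_of C) \<in> ordIso" using canc_inf[OF False assms(5,6)] .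
  have "(card_of A1, card_of B1) \<in> ordIso" by (rule ordIso_transitive[OF c1 ordIso_symmetric[OF c2]])
  then show ?thesis using card_of_ordIso[of A1 B1] by simp
qed

definition CN :: "'v graph \<Rightarrow> 'v set \<Rightarrow> bool" where
  "CN X S \<longleftrightarrow> (\<exists>z\<in>verts X. S \<subseteq> nbhd X z)"

definition aut :: "'v graph \<Rightarrow> ('v \<Rightarrow> 'v) \<Rightarrow> bool" where
  "aut X g \<longleftrightarrow> bij_betw g (verts X) (verts X) \<and>
     (\<forall>x\<in>verts X. \<forall>y\<in>verts X. (x,y)\<in>edges X \<longleftrightarrow> (g x, g y)\<in>edges X)"

definition RR :: "'v graph \<Rightarrow> ('v \<times> 'v) set" where
  "RR X = {(x,y). x \<in> verts X \<and> y \<in> verts X \<and> CN X {x,y}}"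

definition piece :: "'v graph \<Rightarrow> 'v \<Rightarrow> 'v set" where
  "piece X x = {y. (x,y) \<in> (RR X)\<^sup>*}"

lemma aut_CN:
  assumes "aut X g" "is_graph X" "S \<subseteq> verts X"
  shows "CN X (g`S) \<longleftrightarrow> CN X S"
proof
  assume "CN X (g`S)"
  then obtain z where z: "z \<in> verts X" "g`S \<subseteq> nbhd X z" unfolding CN_def by blast
  have "z \<in> g ` verts X" using assms(1) z(1) unfolding aut_def bij_betw_def by blast
  then obtain z0 where z0: "z0 \<in> verts X" "z = g z0" by blast
  have "S \<subseteq> nbhd X z0"
  proof
    fix s assume "s \<in> S"
    hence "(g z0, g s) \<in> edges X" using z z0 unfolding nbhd_def by blast
    thus "s \<in> nbhd X z0" using assms \<open>s\<in>S\<close> z0 unfolding aut_def nbhd_def by blast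
  qed
  thus "CN X S" using z0 unfolding CN_def by blast
next
  assume "CN X S"
  then obtain z where z: "z \<in> verts X" "S \<subseteq> nbhd X z" unfolding CN_def by blast
  have "g z \<in> verts X" using assms(1) z(1) unfolding aut_def bij_betw_def by blast
  moreover have "g`S \<subseteq> nbhd X (g z)"
  proof
    fix t assume "t \<in> g`S"
    then obtain s where s: "s \<in> S" "t = g s" by blast
    hence "(z, s) \<in> edges X" using z unfolding nbhd_def by blast
    thus "t \<in> nbhd X (g z)" using assms s z unfolding aut_def nbhd_def by blast
  qed
  ultimately show "CN X (g`S)" unfolding CN_def by blast
qed

lemma aut_id: "aut X id"
  unfolding aut_def by auto

lemma aut_comp:
  assumes "aut X g" "aut X h" shows "aut X (g \<circ> h)"
proof -
  have "bij_betw (g \<circ> h) (verts X) (verts X)"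
    using assms bij_betw_trans unfolding aut_def by blast
  moreover have "\<forall>x\<in>verts X. h x \<in> verts X" using assms(2) unfolding aut_def bij_betw_def by blast
  moreover have "\<forall>x\<in>verts X. \<forall>y\<in>verts X. (x,y)\<in>edges X \<longleftrightarrow> ((g \<circ> h) x, (g \<circ> h) y)\<in>edges X"
  proof (intro ballI)
    fix x y assume xy: "x \<in> verts X" "y \<in> verts X"
    have "(x,y)\<in>edges X \<longleftrightarrow> (h x, h y) \<in> edges X" using assms(2) xy unfolding aut_def by blast
    also have "\<dots> \<longleftrightarrow> (g (h x), g (h y)) \<in> edges X" using assms(1) xy \<open>\<forall>x\<in>verts X. h x \<in> verts X\<close> unfolding aut_def by blast
    finally show "(x,y)\<in>edges X \<longleftrightarrow> ((g \<circ> h) x, (g \<circ> h) y)\<in>edges X" by simp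
  qed
  ultimately show ?thesis unfolding aut_def by blast
qed

lemma aut_inv:
  assumes "aut X g" shows "aut X (inv_into (verts X) g)"
proof -
  have b: "bij_betw g (verts X) (verts X)" using assms unfolding aut_def by blast
  have bi: "bij_betw (inv_into (verts X) g) (verts X) (verts X)" using bij_betw_inv_into[OF b] .
  have "\<forall>x\<in>verts X. \<forall>y\<in>verts X. (x,y)\<in>edges X \<longleftrightarrow>
        (inv_into (verts X) g x, inv_into (verts X) g y)\<in>edges X"
  proof (intro ballI)
    fix x y assume xy: "x \<in> verts X" "y \<in> verts X"
    let ?x = "inv_into (verts X) g x" and ?y = "inv_into (verts X) g y"
    have "?x \<in> verts X" "?y \<in> verts X" using bi xy unfolding bij_betw_def by auto
    moreover have "g ?x = x" "g ?y = y" using b xy by (simp_all add: bij_betw_inv_into_right)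
    ultimately show "(x,y)\<in>edges X \<longleftrightarrow> (?x, ?y)\<in>edges X" using assms unfolding aut_def by metis
  qed
  thus ?thesis using bi unfolding aut_def by blast
qed

lemma aut_in: "aut X g \<Longrightarrow> x \<in> verts X \<Longrightarrow> g x \<in> verts X"
  unfolding aut_def bij_betw_def by blast

lemma RR_sym: "sym (RR X)"
proof (rule symI)
  fix x y assume "(x,y) \<in> RR X"
  moreover have "{y,x} = {x,y}" by blast
  ultimately show "(y,x) \<in> RR X" unfolding RR_def by simp
qed

lemma rt_V: assumes "(x,y) \<in> (RR X)\<^sup>*" "x \<in> verts X" shows "y \<in> verts X"
  using assms(1)
proof (induction rule: rtrancl_induct)
  case base show ?case using assms(2) .
next
  case (step y z) then show ?case unfolding RR_def by blast
qed

lemma piece_V: assumes "x \<in> verts X" shows "piece X x \<subseteq> verts X"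
proof
  fix y assume "y \<in> piece X x"
  hence "(x,y) \<in> (RR X)\<^sup>*" unfolding piece_def by simp
  thus "y \<in> verts X" using rt_V assms by metis
qed

lemma piece_self: "x \<in> piece X x"
  unfolding piece_def by blast

lemma piece_eq: "y \<in> piece X x \<Longrightarrow> piece X y = piece X x"
proof -
  assume "y \<in> piece X x"
  hence xy: "(x,y) \<in> (RR X)\<^sup>*" unfolding piece_def by blast
  have yx: "(y,x) \<in> (RR X)\<^sup>*" using symD[OF sym_rtrancl[OF RR_sym] xy] .
  show ?thesis unfolding piece_def
  proof (intro set_eqI iffI)
    fix z assume "z \<in> {z. (y,z) \<in> (RR X)\<^sup>*}"
    thus "z \<in> {z. (x,z) \<in> (RR X)\<^sup>*}" using rtrancl_trans[OF xy] by simp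
  next
    fix z assume "z \<in> {z. (x,z) \<in> (RR X)\<^sup>*}"
    thus "z \<in> {z. (y,z) \<in> (RR X)\<^sup>*}" using rtrancl_trans[OF yx] by simp
  qed
qed

lemma aut_RR:
  assumes "aut X g" "is_graph X" "(x,y) \<in> RR X" shows "(g x, g y) \<in> RR X"
proof -
  have "x \<in> verts X" "y \<in> verts X" "CN X {x,y}" using assms(3) unfolding RR_def by auto
  moreover have "g`{x,y} = {g x, g y}" by simp
  ultimately show ?thesis using aut_CN[OF assms(1,2), of "{x,y}"] aut_in[OF assms(1)]
    unfolding RR_def by auto
qed

lemma aut_rt:
  assumes "aut X g" "is_graph X" "(x,y) \<in> (RR X)\<^sup>*" shows "(g x, g y) \<in> (RR X)\<^sup>*"
  using assms(3)
proof (induction rule: rtrancl_induct)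
  case base show ?case by (rule rtrancl_refl)
next
  case (step y z)
  have "(g y, g z) \<in> RR X" using aut_RR[OF assms(1,2) step(2)] .
  with step.IH show ?case by (rule rtrancl_into_rtrancl)
qed

lemma aut_piece:
  assumes "aut X g" "is_graph X" "x \<in> verts X" shows "g ` piece X x = piece X (g x)"
proof
  show "g ` piece X x \<subseteq> piece X (g x)" using aut_rt[OF assms(1,2)] unfolding piece_def by blast
next
  show "piece X (g x) \<subseteq> g ` piece X x"
  proof
    fix y assume y: "y \<in> piece X (g x)"
    let ?g = "inv_into (verts X) g"
    have b: "bij_betw g (verts X) (verts X)" using assms unfolding aut_def by blast
    have yV: "y \<in> verts X" using piece_V[OF aut_in[OF assms(1,3)]] y by blast
    have "(g x, y) \<in> (RR X)\<^sup>*" using y unfolding piece_def by blast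
    hence "(?g (g x), ?g y) \<in> (RR X)\<^sup>*" using aut_rt[OF aut_inv[OF assms(1)] assms(2)] by blast
    moreover have "?g (g x) = x" using b assms(3) bij_betw_inv_into_left by fastforce
    ultimately have "?g y \<in> piece X x" unfolding piece_def by simp
    moreover have "g (?g y) = y" using b yV bij_betw_inv_into_right by fastforce
    ultimately show "y \<in> g ` piece X x" by (intro image_eqI[where x="?g y"]) simp_all
  qed
qed

lemma CN_mono: "CN X S \<Longrightarrow> T \<subseteq> S \<Longrightarrow> CN X T"
  unfolding CN_def by blast

lemma CN_RR: "CN X S \<Longrightarrow> S \<subseteq> verts X \<Longrightarrow> x \<in> S \<Longrightarrow> y \<in> S \<Longrightarrow> (x,y) \<in> RR X"
proof -
  assume a: "CN X S" "S \<subseteq> verts X" "x \<in> S" "y \<in> S"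
  hence "CN X {x,y}" using CN_mono[of X S "{x,y}"] by simp
  thus "(x,y) \<in> RR X" using a unfolding RR_def by auto
qed

lemma closed_piece:
  assumes "\<forall>x y. (x,y) \<in> RR X \<longrightarrow> (x\<in>A \<longleftrightarrow> y\<in>A)"
  shows "piece X x \<subseteq> A \<longleftrightarrow> x \<in> A"
proof
  assume "piece X x \<subseteq> A" thus "x \<in> A" using piece_self[of x X] by (rule subsetD)
next
  assume xA: "x \<in> A"
  { fix y assume "(x,y) \<in> (RR X)\<^sup>*"
    hence "y \<in> A"
    proof (induction rule: rtrancl_induct)
      case base show ?case using xA .
    next
      case (step y z) thus ?case using assms[rule_format, of y z] by simp
    qed }
  thus "piece X x \<subseteq> A" unfolding piece_def by (intro subsetI) simp
qed

locale two_inv =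
  fixes X :: "'v graph" and \<sigma> \<tau> :: "'v \<Rightarrow> 'v" and A B :: "'v set"
  assumes gr: "is_graph X"
  and as: "aut X \<sigma>" and at: "aut X \<tau>"
  and ss: "\<forall>x\<in>verts X. \<sigma> (\<sigma> x) = x" and tt: "\<forall>x\<in>verts X. \<tau> (\<tau> x) = x"
  and AV: "A \<subseteq> verts X" and Asw: "\<forall>x\<in>verts X. x \<in> A \<longleftrightarrow> \<sigma> x \<notin> A"
  and Acl: "\<forall>x y. (x,y) \<in> RR X \<longrightarrow> (x\<in>A \<longleftrightarrow> y\<in>A)"
  and BV: "B \<subseteq> verts X" and Bsw: "\<forall>x\<in>verts X. x \<in> B \<longleftrightarrow> \<tau> x \<notin> B"
  and Bcl: "\<forall>x y. (x,y) \<in> RR X \<longrightarrow> (x\<in>B \<longleftrightarrow> y\<in>B)"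
begin

definition "Pcs = piece X ` verts X"
definition "TT = {(P, \<sigma>`P) | P. P \<in> Pcs} \<union> {(P, \<tau>`P) | P. P \<in> Pcs}"
definition "cls P = {P'. (P,P') \<in> TT\<^sup>*}"
definition "Q1 = {P\<in>Pcs. P \<subseteq> A}"
definition "R1 = {P\<in>Pcs. P \<subseteq> B}"

lemma sig_Pcs: "P \<in> Pcs \<Longrightarrow> \<sigma>`P \<in> Pcs \<and> \<sigma>`(\<sigma>`P) = P"
proof -
  assume "P \<in> Pcs"
  then obtain x where x: "x \<in> verts X" "P = piece X x" unfolding Pcs_def by blast
  have "\<sigma>`P = piece X (\<sigma> x)" using aut_piece[OF as gr x(1)] x(2) by simp
  moreover have "\<sigma> x \<in> verts X" using aut_in[OF as x(1)] .
  moreover have "\<sigma>`(\<sigma>`P) = P"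
  proof -
    have "\<forall>y\<in>P. \<sigma> (\<sigma> y) = y" using ss piece_V[OF x(1)] x(2) by blast
    hence "\<sigma>`(\<sigma>`P) = (\<lambda>y. y) ` P" unfolding image_image by (intro image_cong) simp_all
    thus ?thesis by simp
  qed
  ultimately show ?thesis unfolding Pcs_def by blast
qed

lemma tau_Pcs: "P \<in> Pcs \<Longrightarrow> \<tau>`P \<in> Pcs \<and> \<tau>`(\<tau>`P) = P"
proof -
  assume "P \<in> Pcs"
  then obtain x where x: "x \<in> verts X" "P = piece X x" unfolding Pcs_def by blast
  have "\<tau>`P = piece X (\<tau> x)" using aut_piece[OF at gr x(1)] x(2) by simp
  moreover have "\<tau> x \<in> verts X" using aut_in[OF at x(1)] .
  moreover have "\<tau>`(\<tau>`P) = P"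
  proof -
    have "\<forall>y\<in>P. \<tau> (\<tau> y) = y" using tt piece_V[OF x(1)] x(2) by blast
    hence "\<tau>`(\<tau>`P) = (\<lambda>y. y) ` P" unfolding image_image by (intro image_cong) simp_all
    thus ?thesis by simp
  qed
  ultimately show ?thesis unfolding Pcs_def by blast
qed

lemma TT_Pcs: "(P,P') \<in> TT\<^sup>* \<Longrightarrow> P \<in> Pcs \<Longrightarrow> P' \<in> Pcs"
  by (induction rule: rtrancl_induct) (auto simp: TT_def sig_Pcs tau_Pcs)

lemma TT_sym: "sym TT"
  unfolding sym_def TT_def
proof (intro allI impI)
  fix a b assume "(a, b) \<in> {(P, \<sigma> ` P) |P. P \<in> Pcs} \<union> {(P, \<tau> ` P) |P. P \<in> Pcs}"
  thus "(b, a) \<in> {(P, \<sigma> ` P) |P. P \<in> Pcs} \<union> {(P, \<tau> ` P) |P. P \<in> Pcs}"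
  proof
    assume "(a, b) \<in> {(P, \<sigma> ` P) |P. P \<in> Pcs}"
    hence "a \<in> Pcs" "b = \<sigma>`a" by auto
    thus ?thesis using sig_Pcs[of a] by auto
  next
    assume "(a, b) \<in> {(P, \<tau> ` P) |P. P \<in> Pcs}"
    hence "a \<in> Pcs" "b = \<tau>`a" by auto
    thus ?thesis using tau_Pcs[of a] by auto
  qed
qed

lemma TT_aut: "(P,P') \<in> TT\<^sup>* \<Longrightarrow> \<exists>g. aut X g \<and> g`P = P'"
proof (induction rule: rtrancl_induct)
  case base have "aut X id \<and> id`P = P" using aut_id[of X] by simp
  thus ?case by blast
next
  case (step y z)
  then obtain g where g: "aut X g" "g`P = y" by blast
  from step(2) have "z = \<sigma>`y \<or> z = \<tau>`y" unfolding TT_def by blast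
  thus ?case
  proof
    assume "z = \<sigma>`y" thus ?thesis using aut_comp[OF as g(1)] g(2) by (metis image_comp)
  next
    assume "z = \<tau>`y" thus ?thesis using aut_comp[OF at g(1)] g(2) by (metis image_comp)
  qed
qed

lemma cls_eq: "P' \<in> cls P \<Longrightarrow> cls P' = cls P"
proof -
  assume "P' \<in> cls P"
  hence xy: "(P,P') \<in> TT\<^sup>*" unfolding cls_def by blast
  have yx: "(P',P) \<in> TT\<^sup>*" using symD[OF sym_rtrancl[OF TT_sym] xy] .
  show ?thesis unfolding cls_def
  proof (intro set_eqI iffI)
    fix z assume "z \<in> {z. (P',z) \<in> TT\<^sup>*}"
    thus "z \<in> {z. (P,z) \<in> TT\<^sup>*}" using rtrancl_trans[OF xy] by simp
  next
    fix z assume "z \<in> {z. (P,z) \<in> TT\<^sup>*}"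
    thus "z \<in> {z. (P',z) \<in> TT\<^sup>*}" using rtrancl_trans[OF yx] by simp
  qed
qed

lemma cls_self: "P \<in> cls P" unfolding cls_def by blast

lemma pieceA: "x \<in> verts X \<Longrightarrow> piece X x \<subseteq> A \<longleftrightarrow> x \<in> A"
  using closed_piece[OF Acl] .
lemma pieceB: "x \<in> verts X \<Longrightarrow> piece X x \<subseteq> B \<longleftrightarrow> x \<in> B"
  using closed_piece[OF Bcl] .

lemma class_bij:
  assumes "P0 \<in> Pcs" shows "\<exists>h. bij_betw h (cls P0 \<inter> Q1) (cls P0 \<inter> R1)"
proof -
  let ?c = "cls P0"
  have cP: "\<And>P. P \<in> ?c \<Longrightarrow> P \<in> Pcs"
  proof -
    fix P assume "P \<in> ?c"
    hence "(P0,P) \<in> TT\<^sup>*" unfolding cls_def by simp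
    thus "P \<in> Pcs" using TT_Pcs assms by blast
  qed
  have cs: "\<And>P. P \<in> ?c \<Longrightarrow> \<sigma>`P \<in> ?c" 
  proof -
    fix P assume P: "P \<in> ?c"
    hence "(P, \<sigma>`P) \<in> TT" using cP unfolding TT_def by blast
    moreover have "(P0,P) \<in> TT\<^sup>*" using P unfolding cls_def by simp
    ultimately have "(P0, \<sigma>`P) \<in> TT\<^sup>*" by (simp add: rtrancl_into_rtrancl)
    thus "\<sigma>`P \<in> ?c" unfolding cls_def by simp
  qed
  have ct: "\<And>P. P \<in> ?c \<Longrightarrow> \<tau>`P \<in> ?c" 
  proof -
    fix P assume P: "P \<in> ?c"
    hence "(P, \<tau>`P) \<in> TT" using cP unfolding TT_def by blast
    moreover have "(P0,P) \<in> TT\<^sup>*" using P unfolding cls_def by simp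
    ultimately have "(P0, \<tau>`P) \<in> TT\<^sup>*" by (simp add: rtrancl_into_rtrancl)
    thus "\<tau>`P \<in> ?c" unfolding cls_def by simp
  qed
  have sA: "\<And>P. P \<in> Pcs \<Longrightarrow> \<sigma>`P \<subseteq> A \<longleftrightarrow> \<not> P \<subseteq> A"
  proof -
    fix P assume "P \<in> Pcs"
    then obtain x where x: "x \<in> verts X" "P = piece X x" unfolding Pcs_def by blast
    have "\<sigma>`P = piece X (\<sigma> x)" using aut_piece[OF as gr x(1)] x(2) by simp
    thus "\<sigma>`P \<subseteq> A \<longleftrightarrow> \<not> P \<subseteq> A" using pieceA[OF aut_in[OF as x(1)]] pieceA[OF x(1)] x Asw[rule_format, OF x(1)] by simp
  qed
  have tB: "\<And>P. P \<in> Pcs \<Longrightarrow> \<tau>`P \<subseteq> B \<longleftrightarrow> \<not> P \<subseteq> B"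
  proof -
    fix P assume "P \<in> Pcs"
    then obtain x where x: "x \<in> verts X" "P = piece X x" unfolding Pcs_def by blast
    have "\<tau>`P = piece X (\<tau> x)" using aut_piece[OF at gr x(1)] x(2) by simp
    thus "\<tau>`P \<subseteq> B \<longleftrightarrow> \<not> P \<subseteq> B" using pieceB[OF aut_in[OF at x(1)]] pieceB[OF x(1)] x Bsw[rule_format, OF x(1)] by simp
  qed
  have h: "bij_betw (\<lambda>P. \<sigma>`P) (?c \<inter> Q1) (?c - Q1)"
  proof (rule bij_betw_byWitness[where f'="\<lambda>P. \<sigma>`P"])
    show "\<forall>P\<in>?c \<inter> Q1. \<sigma>`\<sigma>`P = P" using sig_Pcs cP by blast
    show "\<forall>P\<in>?c - Q1. \<sigma>`\<sigma>`P = P" using sig_Pcs cP by blast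
    show "(\<lambda>P. \<sigma>`P) ` (?c \<inter> Q1) \<subseteq> ?c - Q1"
    proof
      fix Q assume "Q \<in> (\<lambda>P. \<sigma>`P) ` (?c \<inter> Q1)"
      then obtain P where P: "P \<in> ?c" "P \<in> Q1" "Q = \<sigma>`P" by blast
      have "P \<subseteq> A" using P(2) unfolding Q1_def by simp
      hence "\<not> Q \<subseteq> A" using sA[OF cP[OF P(1)]] P(3) by simp
      thus "Q \<in> ?c - Q1" using cs[OF P(1)] P(3) unfolding Q1_def by simp
    qed
    show "(\<lambda>P. \<sigma>`P) ` (?c - Q1) \<subseteq> ?c \<inter> Q1"
    proof
      fix Q assume "Q \<in> (\<lambda>P. \<sigma>`P) ` (?c - Q1)"
      then obtain P where P: "P \<in> ?c" "P \<notin> Q1" "Q = \<sigma>`P" by blast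
      have "\<not> P \<subseteq> A" using P(2) cP[OF P(1)] unfolding Q1_def by simp
      hence "Q \<subseteq> A" using sA[OF cP[OF P(1)]] P(3) by simp
      moreover have "Q \<in> Pcs" using sig_Pcs[OF cP[OF P(1)]] P(3) by simp
      ultimately show "Q \<in> ?c \<inter> Q1" using cs[OF P(1)] P(3) unfolding Q1_def by simp
    qed
  qed
  have k: "bij_betw (\<lambda>P. \<tau>`P) (?c \<inter> R1) (?c - R1)"
  proof (rule bij_betw_byWitness[where f'="\<lambda>P. \<tau>`P"])
    show "\<forall>P\<in>?c \<inter> R1. \<tau>`\<tau>`P = P" using tau_Pcs cP by blast
    show "\<forall>P\<in>?c - R1. \<tau>`\<tau>`P = P" using tau_Pcs cP by blast
    show "(\<lambda>P. \<tau>`P) ` (?c \<inter> R1) \<subseteq> ?c - R1"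
    proof
      fix Q assume "Q \<in> (\<lambda>P. \<tau>`P) ` (?c \<inter> R1)"
      then obtain P where P: "P \<in> ?c" "P \<in> R1" "Q = \<tau>`P" by blast
      have "P \<subseteq> B" using P(2) unfolding R1_def by simp
      hence "\<not> Q \<subseteq> B" using tB[OF cP[OF P(1)]] P(3) by simp
      thus "Q \<in> ?c - R1" using ct[OF P(1)] P(3) unfolding R1_def by simp
    qed
    show "(\<lambda>P. \<tau>`P) ` (?c - R1) \<subseteq> ?c \<inter> R1"
    proof
      fix Q assume "Q \<in> (\<lambda>P. \<tau>`P) ` (?c - R1)"
      then obtain P where P: "P \<in> ?c" "P \<notin> R1" "Q = \<tau>`P" by blast
      have "\<not> P \<subseteq> B" using P(2) cP[OF P(1)] unfolding R1_def by simp
      hence "Q \<subseteq> B" using tB[OF cP[OF P(1)]] P(3) by simp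
      moreover have "Q \<in> Pcs" using tau_Pcs[OF cP[OF P(1)]] P(3) by simp
      ultimately show "Q \<in> ?c \<inter> R1" using ct[OF P(1)] P(3) unfolding R1_def by simp
    qed
  qed
  show ?thesis using canc[OF _ _ h _ _ k] by blast
qed

definition "HH c = (SOME h. bij_betw h (c \<inter> Q1) (c \<inter> R1))"
definition "Phi P = HH (cls P) P"
definition "WW P = (SOME g. aut X g \<and> g`P = Phi P)"
definition "phi x = WW (piece X x) x"

lemma HH: "P \<in> Pcs \<Longrightarrow> bij_betw (HH (cls P)) (cls P \<inter> Q1) (cls P \<inter> R1)"
  unfolding HH_def by (rule someI_ex[OF class_bij])

lemma Q1P: "P \<in> Q1 \<Longrightarrow> P \<in> Pcs" unfolding Q1_def by simp
lemma R1P: "P \<in> R1 \<Longrightarrow> P \<in> Pcs" unfolding R1_def by simp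

lemma into: "P \<in> Q1 \<Longrightarrow> Phi P \<in> cls P \<inter> R1"
proof -
  assume P: "P \<in> Q1"
  have "P \<in> cls P \<inter> Q1" using P cls_self by simp
  thus ?thesis unfolding Phi_def by (rule bij_betw_apply[OF HH[OF Q1P[OF P]]])
qed

lemma Phi_bij: "bij_betw Phi Q1 R1"
proof -
  have "inj_on Phi Q1"
  proof (rule inj_onI)
    fix P P' assume P: "P \<in> Q1" "P' \<in> Q1" "Phi P = Phi P'"
    have e1: "cls (Phi P) = cls P" using into[OF P(1)] cls_eq by simp
    have e2: "cls (Phi P') = cls P'" using into[OF P(2)] cls_eq by simp
    have c: "cls P = cls P'" using e1 e2 P(3) by simp
    have m1: "P \<in> cls P \<inter> Q1" using P(1) cls_self by simp
    have m2: "P' \<in> cls P \<inter> Q1" using P(2) cls_self[of P'] c by simp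
    have "inj_on (HH (cls P)) (cls P \<inter> Q1)" using HH[OF Q1P[OF P(1)]] unfolding bij_betw_def by simp
    moreover have "HH (cls P) P = HH (cls P) P'" using P(3) c unfolding Phi_def by simp
    ultimately show "P = P'" using m1 m2 by (rule inj_onD)
  qed
  moreover have "Phi ` Q1 = R1"
  proof
    show "Phi ` Q1 \<subseteq> R1" using into by auto
  next
    show "R1 \<subseteq> Phi ` Q1"
    proof
      fix R assume R: "R \<in> R1"
      hence "R \<in> cls R \<inter> R1" using cls_self by simp
      moreover have "HH (cls R) ` (cls R \<inter> Q1) = cls R \<inter> R1"
        using HH[OF R1P[OF R]] unfolding bij_betw_def by simp
      ultimately obtain P where P: "P \<in> cls R \<inter> Q1" "HH (cls R) P = R" by (metis imageE)
      have "cls P = cls R" using P(1) cls_eq by simp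
      hence "Phi P = R" using P(2) unfolding Phi_def by simp
      thus "R \<in> Phi ` Q1" using P(1) by (intro image_eqI[where x=P]) simp_all
    qed
  qed
  ultimately show ?thesis unfolding bij_betw_def by simp
qed

lemma WW: "P \<in> Q1 \<Longrightarrow> aut X (WW P) \<and> WW P ` P = Phi P"
proof -
  assume P: "P \<in> Q1"
  have "(P, Phi P) \<in> TT\<^sup>*" using into[OF P] unfolding cls_def by simp
  hence "\<exists>g. aut X g \<and> g`P = Phi P" by (rule TT_aut)
  thus ?thesis unfolding WW_def by (rule someI_ex)
qed

lemma Pcs_eq: "P \<in> Pcs \<Longrightarrow> y \<in> P \<Longrightarrow> P = piece X y"
proof -
  assume "P \<in> Pcs" "y \<in> P"
  moreover from this(1) obtain x where "P = piece X x" unfolding Pcs_def by auto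
  ultimately show ?thesis using piece_eq[of y X x] by simp
qed

lemma pQ1: "x \<in> A \<Longrightarrow> piece X x \<in> Q1"
proof -
  assume x: "x \<in> A"
  hence xV: "x \<in> verts X" using AV by auto
  hence "piece X x \<in> Pcs" unfolding Pcs_def by simp
  moreover have "piece X x \<subseteq> A" using pieceA[OF xV] x by simp
  ultimately show ?thesis unfolding Q1_def by simp
qed

lemma phi_in: "x \<in> A \<Longrightarrow> phi x \<in> Phi (piece X x)"
proof -
  assume x: "x \<in> A"
  have "phi x \<in> WW (piece X x) ` piece X x" unfolding phi_def using piece_self[of x X] by simp
  thus ?thesis using WW[OF pQ1[OF x]] by simp
qed

lemma Phi_piece: "x \<in> A \<Longrightarrow> Phi (piece X x) = piece X (phi x)"
proof -
  assume x: "x \<in> A"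
  have "Phi (piece X x) \<in> R1" using into[OF pQ1[OF x]] by simp
  hence "Phi (piece X x) \<in> Pcs" by (rule R1P)
  thus ?thesis using phi_in[OF x] by (rule Pcs_eq)
qed

lemma phi_inj: "inj_on phi A"
proof (rule inj_onI)
  fix x x' assume x: "x \<in> A" "x' \<in> A" "phi x = phi x'"
  have "Phi (piece X x) = Phi (piece X x')" using Phi_piece[OF x(1)] Phi_piece[OF x(2)] x(3) by simp
  moreover have "inj_on Phi Q1" using Phi_bij unfolding bij_betw_def by simp
  ultimately have e: "piece X x = piece X x'" using pQ1[OF x(1)] pQ1[OF x(2)] by (simp add: inj_on_eq_iff)
  have ga: "aut X (WW (piece X x))" using WW[OF pQ1[OF x(1)]] by simp
  have "inj_on (WW (piece X x)) (verts X)" using ga unfolding aut_def bij_betw_def by simp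
  moreover have "x \<in> verts X" "x' \<in> verts X" using x AV by auto
  moreover have "WW (piece X x) x = WW (piece X x) x'" using x(3) e unfolding phi_def by simp
  ultimately show "x = x'" by (simp add: inj_on_eq_iff)
qed

lemma phi_into: "x \<in> A \<Longrightarrow> phi x \<in> B"
proof -
  assume x: "x \<in> A"
  have "Phi (piece X x) \<in> R1" using into[OF pQ1[OF x]] by simp
  hence "Phi (piece X x) \<subseteq> B" unfolding R1_def by simp
  thus ?thesis using phi_in[OF x] by auto
qed

lemma phi_onto: "y \<in> B \<Longrightarrow> y \<in> phi ` A"
proof -
  assume y: "y \<in> B"
  have yV: "y \<in> verts X" using y BV by auto
  have "piece X y \<in> R1" using pieceB[OF yV] y yV unfolding R1_def Pcs_def by simp
  hence "piece X y \<in> Phi ` Q1" using Phi_bij unfolding bij_betw_def by simp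
  then obtain P where P: "P \<in> Q1" "Phi P = piece X y" by auto
  have "y \<in> WW P ` P" using WW[OF P(1)] P(2) piece_self[of y X] by simp
  then obtain x where x: "x \<in> P" "y = WW P x" by auto
  have Pp: "P = piece X x" using Pcs_eq[OF Q1P[OF P(1)] x(1)] .
  have "x \<in> A" using P(1) x(1) unfolding Q1_def by auto
  moreover have "phi x = y" using x(2) Pp unfolding phi_def by simp
  ultimately show "y \<in> phi ` A" by auto
qed

lemma phi_bij: "bij_betw phi A B"
  unfolding bij_betw_def using phi_inj phi_into phi_onto by auto

lemma phi_CN: assumes SA: "S \<subseteq> A" shows "CN X (phi`S) \<longleftrightarrow> CN X S"
proof (cases "S = {}")
  case True then show ?thesis by simp
next
  case False
  then obtain x0 where x0: "x0 \<in> S" by blast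
  have x0A: "x0 \<in> A" using x0 SA by auto
  let ?g = "WW (piece X x0)"
  have ga: "aut X ?g" using WW[OF pQ1[OF x0A]] by simp
  have SV: "S \<subseteq> verts X" using SA AV by auto
  have key: "phi`S = ?g`S" if same: "\<forall>s\<in>S. piece X s = piece X x0"
  proof (rule image_cong)
    fix s assume "s \<in> S" thus "phi s = ?g s" using same unfolding phi_def by simp
  qed simp
  have pS: "\<forall>s\<in>S. piece X s = piece X x0" if r: "\<forall>s\<in>S. (x0, s) \<in> RR X"
  proof
    fix s assume s: "s \<in> S"
    hence "s \<in> piece X x0" using r unfolding piece_def by auto
    thus "piece X s = piece X x0" by (rule piece_eq)
  qed
  show ?thesis
  proof
    assume cn: "CN X (phi`S)"
    have PV: "phi ` S \<subseteq> verts X" using phi_into SA BV by auto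
    have "\<forall>s\<in>S. piece X s = piece X x0"
    proof
      fix s assume s: "s \<in> S"
      have "(phi x0, phi s) \<in> RR X" using CN_RR[OF cn PV] x0 s by simp
      hence "phi s \<in> piece X (phi x0)" unfolding piece_def by auto
      hence "piece X (phi s) = piece X (phi x0)" by (rule piece_eq)
      hence eq: "Phi (piece X s) = Phi (piece X x0)" using Phi_piece s x0 SA by auto
      have inj: "inj_on Phi Q1" using Phi_bij unfolding bij_betw_def by simp
      have sA: "s \<in> A" using s SA by auto
      show "piece X s = piece X x0" by (rule inj_onD[OF inj eq pQ1[OF sA] pQ1[OF x0A]])
    qed
    hence "phi`S = ?g`S" by (rule key)
    thus "CN X S" using cn aut_CN[OF ga gr SV] by simp
  next
    assume cn: "CN X S"
    have "\<forall>s\<in>S. (x0, s) \<in> RR X" using CN_RR[OF cn SV] x0 by simp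
    hence "phi`S = ?g`S" by (intro key pS)
    thus "CN X (phi`S)" using cn aut_CN[OF ga gr SV] by simp
  qed
qed

lemma main: "bij_betw phi A B \<and> (\<forall>S\<subseteq>A. CN X (phi`S) \<longleftrightarrow> CN X S)"
  using phi_bij phi_CN by blast

end

lemma two_inv_main:
  assumes "two_inv X \<sigma> \<tau> A B"
  shows "\<exists>phi. bij_betw phi A B \<and> (\<forall>S\<subseteq>A. CN X (phi`S) \<longleftrightarrow> CN X S)"
  using two_inv.main[OF assms] by blast

lemma vK: "verts (tensor K2 G) = {1,2} \<times> verts G"
  by (simp add: tensor_def verts_def K2_def)

lemma eK: "((a,u),(b,v)) \<in> edges (tensor K2 G) \<longleftrightarrow> ((a=1\<and>b=2)\<or>(a=2\<and>b=1)) \<and> (u,v)\<in>edges G"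
  by (auto simp: tensor_def edges_def K2_def)

lemma grK: assumes "is_graph G" shows "is_graph (tensor K2 G)"
proof -
  have "edges (tensor K2 G) \<subseteq> verts (tensor K2 G) \<times> verts (tensor K2 G)"
  proof
    fix e assume "e \<in> edges (tensor K2 G)"
    moreover obtain a u b v where "e = ((a,u),(b,v))" by (metis prod.collapse)
    ultimately show "e \<in> verts (tensor K2 G) \<times> verts (tensor K2 G)"
      using assms eK[of a u b v G] vK[of G] unfolding is_graph_def by auto
  qed
  moreover have "sym (edges (tensor K2 G))"
  proof (rule symI)
    fix p q assume "(p,q) \<in> edges (tensor K2 G)"
    moreover obtain a u b v where "p = (a,u)" "q = (b,v)" by (metis prod.collapse)
    ultimately show "(q,p) \<in> edges (tensor K2 G)"
      using assms eK[of a u b v G] eK[of b v a u G] unfolding is_graph_def sym_def by auto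
  qed
  ultimately show ?thesis unfolding is_graph_def by blast
qed

lemma iso_CN:
  assumes "bij_betw f (verts X) (verts Y)"
    "\<forall>x\<in>verts X. \<forall>y\<in>verts X. (x,y)\<in>edges X \<longleftrightarrow> (f x, f y)\<in>edges Y"
    "S \<subseteq> verts X"
  shows "CN Y (f`S) \<longleftrightarrow> CN X S"
proof
  assume "CN Y (f`S)"
  then obtain z where z: "z \<in> verts Y" "f`S \<subseteq> nbhd Y z" unfolding CN_def by blast
  have "z \<in> f ` verts X" using assms(1) z(1) unfolding bij_betw_def by blast
  then obtain z0 where z0: "z0 \<in> verts X" "z = f z0" by blast
  have "S \<subseteq> nbhd X z0"
  proof
    fix s assume "s \<in> S"
    hence "(f z0, f s) \<in> edges Y" using z z0 unfolding nbhd_def by blast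
    thus "s \<in> nbhd X z0" using assms \<open>s\<in>S\<close> z0 unfolding nbhd_def by blast
  qed
  thus "CN X S" using z0 unfolding CN_def by blast
next
  assume "CN X S"
  then obtain z where z: "z \<in> verts X" "S \<subseteq> nbhd X z" unfolding CN_def by blast
  have "f z \<in> verts Y" using assms(1) z(1) unfolding bij_betw_def by blast
  moreover have "f`S \<subseteq> nbhd Y (f z)"
  proof
    fix t assume "t \<in> f`S"
    then obtain s where s: "s \<in> S" "t = f s" by blast
    hence "(z, s) \<in> edges X" using z unfolding nbhd_def by blast
    thus "t \<in> nbhd Y (f z)" using assms s z unfolding nbhd_def by blast
  qed
  ultimately show "CN Y (f`S)" unfolding CN_def by blast
qed

lemma K2_CN_fst:
  assumes "CN (tensor K2 G) {p,q}" shows "fst p = fst q"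
proof -
  obtain z where z: "(z,p) \<in> edges (tensor K2 G)" "(z,q) \<in> edges (tensor K2 G)"
    using assms unfolding CN_def nbhd_def by blast
  obtain a u b v c w where "z = (a,u)" "p = (b,v)" "q = (c,w)" by (metis prod.collapse)
  thus ?thesis using z eK[of a u b v G] eK[of a u c w G] by auto
qed

definition sw :: "nat \<times> 'a \<Rightarrow> nat \<times> 'a" where "sw p = (3 - fst p, snd p)"

lemma sw_in: "p \<in> verts (tensor K2 G) \<Longrightarrow> sw p \<in> verts (tensor K2 G)"
  unfolding vK sw_def by auto

lemma sw_sw: "p \<in> verts (tensor K2 G) \<Longrightarrow> sw (sw p) = p"
  unfolding vK sw_def by auto

lemma sw_aut: "aut (tensor K2 G) sw"
proof -
  have "bij_betw sw (verts (tensor K2 G)) (verts (tensor K2 G))"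
  proof (rule bij_betw_byWitness[where f'=sw])
    show "\<forall>a\<in>verts (tensor K2 G). sw (sw a) = a" using sw_sw by blast
    show "\<forall>a\<in>verts (tensor K2 G). sw (sw a) = a" using sw_sw by blast
    show "sw ` verts (tensor K2 G) \<subseteq> verts (tensor K2 G)" using sw_in by blast
    show "sw ` verts (tensor K2 G) \<subseteq> verts (tensor K2 G)" using sw_in by blast
  qed
  moreover have "\<forall>x\<in>verts (tensor K2 G). \<forall>y\<in>verts (tensor K2 G).
     (x,y)\<in>edges (tensor K2 G) \<longleftrightarrow> (sw x, sw y)\<in>edges (tensor K2 G)"
  proof (intro ballI)
    fix x y assume xy: "x \<in> verts (tensor K2 G)" "y \<in> verts (tensor K2 G)"
    obtain a u b v where xy2: "x = (a,u)" "y = (b,v)" by (metis prod.collapse)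
    have ab: "a = 1 \<or> a = 2" "b = 1 \<or> b = 2" using xy xy2 vK[of G] by auto
    have sx: "sw x = (3-a,u)" "sw y = (3-b,v)" using xy2 by (simp_all add: sw_def)
    show "(x,y)\<in>edges (tensor K2 G) \<longleftrightarrow> (sw x, sw y)\<in>edges (tensor K2 G)"
      unfolding xy2 using ab by (elim disjE) (simp_all add: eK sw_def)
  qed
  ultimately show ?thesis unfolding aut_def by blast
qed

lemma simp_CN:
  assumes "S \<subseteq> verts G"
  shows "(\<exists>v\<in>verts G. S \<subseteq> nbhd G v) \<longleftrightarrow> CN (tensor K2 G) ({1::nat}\<times>S)"
proof
  assume "\<exists>v\<in>verts G. S \<subseteq> nbhd G v"
  then obtain v where v: "v \<in> verts G" "S \<subseteq> nbhd G v" by blast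
  have "(2::nat,v) \<in> verts (tensor K2 G)" using v vK[of G] by auto
  moreover have "{1::nat}\<times>S \<subseteq> nbhd (tensor K2 G) (2,v)"
    using v eK[of 2 v 1 _ G] unfolding nbhd_def by auto
  ultimately show "CN (tensor K2 G) ({1::nat}\<times>S)" unfolding CN_def by blast
next
  assume "CN (tensor K2 G) ({1::nat}\<times>S)"
  then obtain z where z: "z \<in> verts (tensor K2 G)" "{1::nat}\<times>S \<subseteq> nbhd (tensor K2 G) z"
    unfolding CN_def by blast
  obtain a u where au: "z = (a,u)" by (metis prod.collapse)
  have u: "u \<in> verts G" using z au vK[of G] by auto
  have "S \<subseteq> nbhd G u"
  proof
    fix s assume "s \<in> S"
    hence "(z,(1,s)) \<in> edges (tensor K2 G)" using z unfolding nbhd_def by blast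
    thus "s \<in> nbhd G u" using au eK[of a u 1 s G] unfolding nbhd_def by auto
  qed
  thus "\<exists>v\<in>verts G. S \<subseteq> nbhd G v" using u by blast
qed

lemma nbhd_sub: "is_graph G \<Longrightarrow> nbhd G v \<subseteq> verts G"
  unfolding is_graph_def nbhd_def by auto

lemma nbhd_sym: "is_graph G \<Longrightarrow> u \<in> nbhd G v \<longleftrightarrow> v \<in> nbhd G u"
  unfolding is_graph_def nbhd_def sym_def by blast

lemma cverts_nc: "no_isolated G \<Longrightarrow> cverts (nbhd_complex G) = verts G"
  unfolding no_isolated_def cverts_def nbhd_complex_def by auto

lemma simplices_nc: "simplices (nbhd_complex G) = {S. finite S \<and> (\<exists>v\<in>verts G. S \<subseteq> nbhd G v)}"
  unfolding simplices_def nbhd_complex_def by simp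

lemma part2:
  assumes gG: "is_graph G" and gH: "is_graph H"
    and nG: "no_isolated G" and nH: "no_isolated H"
    and lG: "locally_finite G" and lH: "locally_finite H"
    and sG: "stiff G" and sH: "stiff H"
    and ci: "complex_iso (nbhd_complex G) (nbhd_complex H)"
  shows "graph_iso (tensor K2 G) (tensor K2 H)"
proof -
  obtain \<phi> where pb: "bij_betw \<phi> (verts G) (verts H)"
    and hs: "\<And>S. S \<subseteq> verts G \<Longrightarrow> (finite S \<and> (\<exists>v\<in>verts G. S \<subseteq> nbhd G v)) \<longleftrightarrow>
                 (finite (\<phi>`S) \<and> (\<exists>w\<in>verts H. \<phi>`S \<subseteq> nbhd H w))"
  proof -
    from ci obtain f where f1: "bij_betw f (cverts (nbhd_complex G)) (cverts (nbhd_complex H))"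
      and f2: "\<forall>S. S \<subseteq> cverts (nbhd_complex G) \<longrightarrow> (S \<in> simplices (nbhd_complex G) \<longleftrightarrow> f ` S \<in> simplices (nbhd_complex H))"
      unfolding complex_iso_def by blast
    have "bij_betw f (verts G) (verts H)" using f1 unfolding cverts_nc[OF nG] cverts_nc[OF nH] .
    moreover have "\<And>S. S \<subseteq> verts G \<Longrightarrow> (finite S \<and> (\<exists>v\<in>verts G. S \<subseteq> nbhd G v)) \<longleftrightarrow>
                 (finite (f`S) \<and> (\<exists>w\<in>verts H. f`S \<subseteq> nbhd H w))"
    proof -
      fix S assume "S \<subseteq> verts G"
      hence "S \<subseteq> cverts (nbhd_complex G)" using cverts_nc[OF nG] by simp
      hence "S \<in> simplices (nbhd_complex G) \<longleftrightarrow> f ` S \<in> simplices (nbhd_complex H)" using f2 by simp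
      thus "(finite S \<and> (\<exists>v\<in>verts G. S \<subseteq> nbhd G v)) \<longleftrightarrow>
                 (finite (f`S) \<and> (\<exists>w\<in>verts H. f`S \<subseteq> nbhd H w))" unfolding simplices_nc by simp
    qed
    ultimately show ?thesis using that by blast
  qed
  let ?pi = "inv_into (verts G) \<phi>"
  have inj: "inj_on \<phi> (verts G)" using pb unfolding bij_betw_def by simp
  have img: "\<phi> ` verts G = verts H" using pb unfolding bij_betw_def by simp
  have bk: "\<And>T. T \<subseteq> verts H \<Longrightarrow> ?pi ` T \<subseteq> verts G \<and> \<phi> ` (?pi ` T) = T"
  proof -
    fix T assume T: "T \<subseteq> verts H"
    have "?pi ` T \<subseteq> verts G" using T img inv_into_into[of _ \<phi> "verts G"] by blast
    moreover have "\<phi> ` (?pi ` T) = T" using T img by (simp add: image_inv_into_cancel)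
    ultimately show "?pi ` T \<subseteq> verts G \<and> \<phi> ` (?pi ` T) = T" by simp
  qed
  have pre: "\<And>w. w \<in> verts H \<Longrightarrow> \<exists>v\<in>verts G. ?pi ` nbhd H w \<subseteq> nbhd G v"
  proof -
    fix w assume w: "w \<in> verts H"
    let ?S = "?pi ` nbhd H w"
    have S1: "?S \<subseteq> verts G" "\<phi> ` ?S = nbhd H w" using bk[OF nbhd_sub[OF gH]] by simp_all
    have fin: "finite (nbhd H w)" using lH w unfolding locally_finite_def by simp
    have "finite ?S" using fin by simp
    moreover have "finite (\<phi> ` ?S) \<and> (\<exists>w'\<in>verts H. \<phi>`?S \<subseteq> nbhd H w')" using S1(2) fin w by auto
    ultimately show "\<exists>v\<in>verts G. ?S \<subseteq> nbhd G v" using hs[OF S1(1)] by blast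
  qed
  have ex: "\<And>v. v \<in> verts G \<Longrightarrow> \<exists>w\<in>verts H. \<phi> ` nbhd G v = nbhd H w"
  proof -
    fix v assume v: "v \<in> verts G"
    have NV: "nbhd G v \<subseteq> verts G" by (rule nbhd_sub[OF gG])
    have "finite (nbhd G v)" using lG v unfolding locally_finite_def by simp
    hence "finite (\<phi> ` nbhd G v) \<and> (\<exists>w\<in>verts H. \<phi>`nbhd G v \<subseteq> nbhd H w)" using hs[OF NV] v by blast
    then obtain w where w: "w \<in> verts H" "\<phi>`nbhd G v \<subseteq> nbhd H w" by blast
    let ?S = "?pi ` nbhd H w"
    have S1: "?S \<subseteq> verts G" "\<phi> ` ?S = nbhd H w" using bk[OF nbhd_sub[OF gH]] by simp_all
    obtain v' where v': "v' \<in> verts G" "?S \<subseteq> nbhd G v'" using pre[OF w(1)] by blast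
    have sub: "nbhd G v \<subseteq> ?S"
    proof
      fix a assume a: "a \<in> nbhd G v"
      hence aV: "a \<in> verts G" using NV by auto
      have "\<phi> a \<in> nbhd H w" using a w(2) by auto
      moreover have "?pi (\<phi> a) = a" using inv_into_f_f[OF inj aV] .
      ultimately show "a \<in> ?S" by (metis imageI)
    qed
    hence "nbhd G v \<subseteq> nbhd G v'" using v'(2) by auto
    hence "v = v'" using sG v v'(1) unfolding stiff_def by blast
    hence "?S = nbhd G v" using sub v'(2) by auto
    thus "\<exists>w\<in>verts H. \<phi> ` nbhd G v = nbhd H w" using S1(2) w(1) by auto
  qed
  define \<psi> where "\<psi> v = (SOME w. w \<in> verts H \<and> \<phi> ` nbhd G v = nbhd H w)" for v
  have psi: "\<And>v. v \<in> verts G \<Longrightarrow> \<psi> v \<in> verts H \<and> \<phi> ` nbhd G v = nbhd H (\<psi> v)"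
  proof -
    fix v assume "v \<in> verts G"
    hence "\<exists>w. w \<in> verts H \<and> \<phi> ` nbhd G v = nbhd H w" using ex by blast
    thus "\<psi> v \<in> verts H \<and> \<phi> ` nbhd G v = nbhd H (\<psi> v)" unfolding \<psi>_def by (rule someI_ex)
  qed
  have psi_inj: "inj_on \<psi> (verts G)"
  proof (rule inj_onI)
    fix v v' assume v: "v \<in> verts G" "v' \<in> verts G" "\<psi> v = \<psi> v'"
    have "\<phi> ` nbhd G v = \<phi> ` nbhd G v'" using psi[OF v(1)] psi[OF v(2)] v(3) by simp
    hence "nbhd G v = nbhd G v'" using inj_on_image_eq_iff[OF inj nbhd_sub[OF gG] nbhd_sub[OF gG]] by simp
    thus "v = v'" using sG v unfolding stiff_def by blast
  qed
  have psi_onto: "\<psi> ` verts G = verts H"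
  proof
    show "\<psi> ` verts G \<subseteq> verts H" using psi by auto
  next
    show "verts H \<subseteq> \<psi> ` verts G"
    proof
      fix w assume w: "w \<in> verts H"
      obtain v where v: "v \<in> verts G" "?pi ` nbhd H w \<subseteq> nbhd G v" using pre[OF w] by blast
      have "nbhd H w = \<phi> ` (?pi ` nbhd H w)" using bk[OF nbhd_sub[OF gH]] by simp
      also have "\<dots> \<subseteq> \<phi> ` nbhd G v" using v(2) by (rule image_mono)
      also have "\<dots> = nbhd H (\<psi> v)" using psi[OF v(1)] by simp
      finally have "nbhd H w \<subseteq> nbhd H (\<psi> v)" .
      hence "w = \<psi> v" using sH w psi[OF v(1)] unfolding stiff_def by blast
      thus "w \<in> \<psi> ` verts G" using v(1) by simp
    qed
  qed
  have key: "\<And>u v. u \<in> verts G \<Longrightarrow> v \<in> verts G \<Longrightarrow> (u \<in> nbhd G v \<longleftrightarrow> \<phi> u \<in> nbhd H (\<psi> v))"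
  proof -
    fix u v assume uv: "u \<in> verts G" "v \<in> verts G"
    have "\<phi> u \<in> nbhd H (\<psi> v) \<longleftrightarrow> \<phi> u \<in> \<phi> ` nbhd G v" using psi[OF uv(2)] by simp
    also have "\<dots> \<longleftrightarrow> u \<in> nbhd G v" using inj_on_image_mem_iff[OF inj uv(1) nbhd_sub[OF gG]] .
    finally show "u \<in> nbhd G v \<longleftrightarrow> \<phi> u \<in> nbhd H (\<psi> v)" by simp
  qed
  define F where "F p = (if fst p = 1 then (1::nat, \<phi> (snd p)) else (2, \<psi> (snd p)))" for p :: "nat \<times> 'a"
  let ?psi = "inv_into (verts G) \<psi>"
  define F' where "F' p = (if fst p = 1 then (1::nat, ?pi (snd p)) else (2, ?psi (snd p)))" for p :: "nat \<times> 'b"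
  have pib: "bij_betw \<psi> (verts G) (verts H)" using psi_inj psi_onto unfolding bij_betw_def by simp
  have Fb: "bij_betw F (verts (tensor K2 G)) (verts (tensor K2 H))"
  proof (rule bij_betw_byWitness[where f'=F'])
    show "\<forall>a\<in>verts (tensor K2 G). F' (F a) = a"
    proof
      fix a assume a0: "a \<in> verts (tensor K2 G)"
      obtain i u where iu: "a = (i,u)" by (metis prod.collapse)
      have a: "i = 1 \<or> i = 2" "u \<in> verts G" using a0 iu vK[of G] by auto
      have l1: "?pi (\<phi> u) = u" using inv_into_f_f[OF inj a(2)] .
      have l2: "?psi (\<psi> u) = u" using inv_into_f_f[OF psi_inj a(2)] .
      show "F' (F a) = a" unfolding iu using a(1) l1 l2 by (elim disjE) (simp_all add: F_def F'_def)
    qed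
    show "\<forall>a\<in>verts (tensor K2 H). F (F' a) = a"
    proof
      fix a assume a0: "a \<in> verts (tensor K2 H)"
      obtain i u where iu: "a = (i,u)" by (metis prod.collapse)
      have a: "i = 1 \<or> i = 2" "u \<in> verts H" using a0 iu vK[of H] by auto
      have l1: "\<phi> (?pi u) = u" using f_inv_into_f[of u \<phi> "verts G"] img a(2) by simp
      have l2: "\<psi> (?psi u) = u" using f_inv_into_f[of u \<psi> "verts G"] psi_onto a(2) by simp
      show "F (F' a) = a" unfolding iu using a(1) l1 l2 by (elim disjE) (simp_all add: F_def F'_def)
    qed
    show "F ` verts (tensor K2 G) \<subseteq> verts (tensor K2 H)"
    proof
      fix b assume "b \<in> F ` verts (tensor K2 G)"
      then obtain a where a0: "a \<in> verts (tensor K2 G)" "b = F a" by auto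
      obtain i u where iu: "a = (i,u)" by (metis prod.collapse)
      have a: "i = 1 \<or> i = 2" "u \<in> verts G" using a0 iu vK[of G] by auto
      have "\<phi> u \<in> verts H" "\<psi> u \<in> verts H" using img psi a(2) by auto
      thus "b \<in> verts (tensor K2 H)" unfolding a0(2) iu vK[of H] using a(1) by (elim disjE) (simp_all add: F_def)
    qed
    show "F' ` verts (tensor K2 H) \<subseteq> verts (tensor K2 G)"
    proof
      fix b assume "b \<in> F' ` verts (tensor K2 H)"
      then obtain a where a0: "a \<in> verts (tensor K2 H)" "b = F' a" by auto
      obtain i u where iu: "a = (i,u)" by (metis prod.collapse)
      have a: "i = 1 \<or> i = 2" "u \<in> verts H" using a0 iu vK[of H] by auto
      have "?pi u \<in> verts G" using inv_into_into[of u \<phi> "verts G"] img a(2) by simp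
      moreover have "?psi u \<in> verts G" using inv_into_into[of u \<psi> "verts G"] psi_onto a(2) by simp
      ultimately show "b \<in> verts (tensor K2 G)" unfolding a0(2) iu vK[of G] using a(1) by (elim disjE) (simp_all add: F'_def)
    qed
  qed
  have Fe: "\<forall>x\<in>verts (tensor K2 G). \<forall>y\<in>verts (tensor K2 G).
     (x,y)\<in>edges (tensor K2 G) \<longleftrightarrow> (F x, F y)\<in>edges (tensor K2 H)"
  proof (intro ballI)
    fix x y assume xy: "x \<in> verts (tensor K2 G)" "y \<in> verts (tensor K2 G)"
    obtain a u b v where xy2: "x = (a,u)" "y = (b,v)" by (metis prod.collapse)
    have ab: "a = 1 \<or> a = 2" "b = 1 \<or> b = 2" "u \<in> verts G" "v \<in> verts G" using xy xy2 vK[of G] by auto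
    have e1: "(u,v) \<in> edges G \<longleftrightarrow> v \<in> nbhd G u" unfolding nbhd_def by simp
    have e2: "(u,v) \<in> edges G \<longleftrightarrow> u \<in> nbhd G v" using nbhd_sym[OF gG] unfolding nbhd_def by blast
    have k1: "(\<phi> u, \<psi> v) \<in> edges H \<longleftrightarrow> \<phi> u \<in> nbhd H (\<psi> v)" using nbhd_sym[OF gH] unfolding nbhd_def by blast
    have k2: "(\<psi> u, \<phi> v) \<in> edges H \<longleftrightarrow> \<phi> v \<in> nbhd H (\<psi> u)" unfolding nbhd_def by simp
    show "(x,y)\<in>edges (tensor K2 G) \<longleftrightarrow> (F x, F y)\<in>edges (tensor K2 H)"
      unfolding xy2 using ab key[OF ab(3) ab(4)] key[OF ab(4) ab(3)] e1 e2 k1 k2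
      by (elim disjE) (simp_all add: eK F_def)
  qed
  show ?thesis unfolding graph_iso_def using Fb Fe by blast
qed

lemma K2_fst12: "p \<in> verts (tensor K2 G) \<Longrightarrow> fst p = 1 \<or> fst p = 2"
  unfolding vK by auto

lemma part1:
  assumes gG: "is_graph G" and gH: "is_graph H"
    and nG: "no_isolated G" and nH: "no_isolated H"
    and iso: "graph_iso (tensor K2 G) (tensor K2 H)"
  shows "complex_iso (nbhd_complex G) (nbhd_complex H)"
proof -
  let ?X = "tensor K2 G" and ?Y = "tensor K2 H"
  obtain f where fb: "bij_betw f (verts ?X) (verts ?Y)"
    and fe: "\<forall>x\<in>verts ?X. \<forall>y\<in>verts ?X. (x,y)\<in>edges ?X \<longleftrightarrow> (f x, f y)\<in>edges ?Y"
    using iso unfolding graph_iso_def by blast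
  define fi where "fi = inv_into (verts ?X) f"
  define \<tau> where "\<tau> x = fi (sw (f x))" for x
  define A where "A = {1::nat} \<times> verts G"
  define B where "B = {x \<in> verts ?X. fst (f x) = 1}"
  have finj: "inj_on f (verts ?X)" and fimg: "f ` verts ?X = verts ?Y" using fb unfolding bij_betw_def by auto
  have fV: "\<And>x. x \<in> verts ?X \<Longrightarrow> f x \<in> verts ?Y" using fimg by auto
  have fiV: "\<And>y. y \<in> verts ?Y \<Longrightarrow> fi y \<in> verts ?X \<and> f (fi y) = y"
  proof -
    fix y assume y: "y \<in> verts ?Y"
    have "fi y \<in> verts ?X" unfolding fi_def using inv_into_into[of y f "verts ?X"] y fimg by simp
    moreover have "f (fi y) = y" unfolding fi_def using f_inv_into_f[of y f "verts ?X"] y fimg by simp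
    ultimately show "fi y \<in> verts ?X \<and> f (fi y) = y" by simp
  qed
  have fif: "\<And>x. x \<in> verts ?X \<Longrightarrow> fi (f x) = x" unfolding fi_def using inv_into_f_f[OF finj] by simp
  have tV: "\<And>x. x \<in> verts ?X \<Longrightarrow> \<tau> x \<in> verts ?X \<and> f (\<tau> x) = sw (f x)"
  proof -
    fix x assume x: "x \<in> verts ?X"
    have "sw (f x) \<in> verts ?Y" using sw_in fV[OF x] by blast
    thus "\<tau> x \<in> verts ?X \<and> f (\<tau> x) = sw (f x)" unfolding \<tau>_def using fiV by blast
  qed
  have tt: "\<forall>x\<in>verts ?X. \<tau> (\<tau> x) = x"
  proof
    fix x assume x: "x \<in> verts ?X"
    have "\<tau> (\<tau> x) = fi (sw (f (\<tau> x)))" unfolding \<tau>_def ..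
    also have "\<dots> = fi (sw (sw (f x)))" using tV[OF x] by simp
    also have "\<dots> = fi (f x)" using sw_sw[OF fV[OF x]] by simp
    also have "\<dots> = x" using fif[OF x] .
    finally show "\<tau> (\<tau> x) = x" .
  qed
  have swY: "\<forall>x\<in>verts ?Y. \<forall>y\<in>verts ?Y. (x,y)\<in>edges ?Y \<longleftrightarrow> (sw x, sw y)\<in>edges ?Y"
    using sw_aut[of H] unfolding aut_def by blast
  have at: "aut ?X \<tau>"
  proof -
    have "bij_betw \<tau> (verts ?X) (verts ?X)"
    proof (rule bij_betw_byWitness[where f'=\<tau>])
      show "\<forall>a\<in>verts ?X. \<tau> (\<tau> a) = a" using tt .
      show "\<forall>a\<in>verts ?X. \<tau> (\<tau> a) = a" using tt .
      show "\<tau> ` verts ?X \<subseteq> verts ?X" using tV by blast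
      show "\<tau> ` verts ?X \<subseteq> verts ?X" using tV by blast
    qed
    moreover have "\<forall>x\<in>verts ?X. \<forall>y\<in>verts ?X. (x,y)\<in>edges ?X \<longleftrightarrow> (\<tau> x, \<tau> y)\<in>edges ?X"
    proof (intro ballI)
      fix x y assume xy: "x \<in> verts ?X" "y \<in> verts ?X"
      have "(x,y)\<in>edges ?X \<longleftrightarrow> (f x, f y)\<in>edges ?Y" using fe xy by blast
      also have "\<dots> \<longleftrightarrow> (sw (f x), sw (f y))\<in>edges ?Y" using swY fV xy by blast
      also have "\<dots> \<longleftrightarrow> (f (\<tau> x), f (\<tau> y))\<in>edges ?Y" using tV xy by simp
      also have "\<dots> \<longleftrightarrow> (\<tau> x, \<tau> y)\<in>edges ?X" using fe tV xy by blast
      finally show "(x,y)\<in>edges ?X \<longleftrightarrow> (\<tau> x, \<tau> y)\<in>edges ?X" .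
    qed
    ultimately show ?thesis unfolding aut_def by blast
  qed
  have RRfst: "\<And>x y. (x,y) \<in> RR ?X \<Longrightarrow> fst x = fst y"
    unfolding RR_def using K2_CN_fst by blast
  have RRf: "\<And>x y. (x,y) \<in> RR ?X \<Longrightarrow> fst (f x) = fst (f y)"
  proof -
    fix x y assume "(x,y) \<in> RR ?X"
    hence xy: "x \<in> verts ?X" "y \<in> verts ?X" "CN ?X {x,y}" unfolding RR_def by auto
    hence "CN ?Y (f ` {x,y})" using iso_CN[OF fb fe, of "{x,y}"] by simp
    hence "CN ?Y {f x, f y}" by simp
    thus "fst (f x) = fst (f y)" by (rule K2_CN_fst)
  qed
  have ti: "two_inv ?X sw \<tau> A B"
  proof (unfold_locales)
    show "is_graph ?X" using grK[OF gG] .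
    show "aut ?X sw" by (rule sw_aut)
    show "aut ?X \<tau>" by (rule at)
    show "\<forall>x\<in>verts ?X. sw (sw x) = x" using sw_sw by blast
    show "\<forall>x\<in>verts ?X. \<tau> (\<tau> x) = x" by (rule tt)
    show "A \<subseteq> verts ?X" unfolding A_def vK by auto
    show "\<forall>x\<in>verts ?X. x \<in> A \<longleftrightarrow> sw x \<notin> A"
    proof
      fix x assume x: "x \<in> verts ?X"
      obtain i u where iu: "x = (i,u)" by (metis prod.collapse)
      have "i = 1 \<or> i = 2" "u \<in> verts G" using x iu vK[of G] by auto
      thus "x \<in> A \<longleftrightarrow> sw x \<notin> A" unfolding iu A_def by (elim disjE) (simp_all add: sw_def)
    qed
    show "\<forall>x y. (x,y) \<in> RR ?X \<longrightarrow> (x\<in>A \<longleftrightarrow> y\<in>A)"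
    proof (intro allI impI)
      fix x y assume r: "(x,y) \<in> RR ?X"
      hence "x \<in> verts ?X" "y \<in> verts ?X" unfolding RR_def by auto
      hence "snd x \<in> verts G" "snd y \<in> verts G" unfolding vK by auto
      moreover have "fst x = fst y" using RRfst[OF r] .
      ultimately show "x\<in>A \<longleftrightarrow> y\<in>A" unfolding A_def by (simp add: mem_Times_iff)
    qed
    show "B \<subseteq> verts ?X" unfolding B_def by auto
    show "\<forall>x\<in>verts ?X. x \<in> B \<longleftrightarrow> \<tau> x \<notin> B"
    proof
      fix x assume x: "x \<in> verts ?X"
      have "fst (f x) = 1 \<or> fst (f x) = 2" using K2_fst12[OF fV[OF x]] .
      moreover have "fst (f (\<tau> x)) = 3 - fst (f x)" using tV[OF x] by (simp add: sw_def)
      moreover have "\<tau> x \<in> verts ?X" using tV[OF x] by simp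
      ultimately show "x \<in> B \<longleftrightarrow> \<tau> x \<notin> B" unfolding B_def using x by auto
    qed
    show "\<forall>x y. (x,y) \<in> RR ?X \<longrightarrow> (x\<in>B \<longleftrightarrow> y\<in>B)"
    proof (intro allI impI)
      fix x y assume r: "(x,y) \<in> RR ?X"
      hence "x \<in> verts ?X" "y \<in> verts ?X" unfolding RR_def by auto
      moreover have "fst (f x) = fst (f y)" using RRf[OF r] .
      ultimately show "x\<in>B \<longleftrightarrow> y\<in>B" unfolding B_def by simp
    qed
  qed
  obtain \<phi> where pb: "bij_betw \<phi> A B" and pc: "\<forall>S\<subseteq>A. CN ?X (\<phi>`S) \<longleftrightarrow> CN ?X S"
    using two_inv_main[OF ti] by blast
  define \<psi> where "\<psi> v = snd (f (\<phi> (1::nat, v)))" for v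
  have b1: "bij_betw (\<lambda>v. (1::nat, v)) (verts G) A"
    unfolding A_def bij_betw_def inj_on_def by auto
  have BX: "B \<subseteq> verts ?X" unfolding B_def by auto
  have fB: "f ` B = {1::nat} \<times> verts H"
  proof
    show "f ` B \<subseteq> {1::nat} \<times> verts H"
    proof
      fix y assume "y \<in> f ` B"
      then obtain x where x: "x \<in> B" "y = f x" by auto
      have "x \<in> verts ?X" using x(1) BX by blast
      hence "f x \<in> verts ?Y" by (rule fV)
      thus "y \<in> {1::nat} \<times> verts H" using x unfolding B_def vK by (cases "f x") auto
    qed
  next
    show "{1::nat} \<times> verts H \<subseteq> f ` B"
    proof
      fix y assume y: "y \<in> {1::nat} \<times> verts H"
      hence yY: "y \<in> verts ?Y" unfolding vK by auto
      have "fi y \<in> B" using fiV[OF yY] y unfolding B_def by auto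
      moreover have "f (fi y) = y" using fiV[OF yY] by simp
      ultimately show "y \<in> f ` B" by (metis imageI)
    qed
  qed
  have b3: "bij_betw f B ({1::nat} \<times> verts H)"
    using bij_betw_subset[OF fb BX] fB by simp
  have b4: "bij_betw snd ({1::nat} \<times> verts H) (verts H)"
    unfolding bij_betw_def inj_on_def by auto
  have "bij_betw (snd \<circ> (f \<circ> (\<phi> \<circ> (\<lambda>v. (1::nat, v))))) (verts G) (verts H)"
    by (rule bij_betw_trans[OF bij_betw_trans[OF bij_betw_trans[OF b1 pb] b3] b4])
  hence psb: "bij_betw \<psi> (verts G) (verts H)" unfolding \<psi>_def comp_def .
  have fp: "\<And>v. v \<in> verts G \<Longrightarrow> f (\<phi> (1, v)) = (1, \<psi> v)"
  proof -
    fix v assume v: "v \<in> verts G"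
    have "(1::nat, v) \<in> A" using v unfolding A_def by simp
    hence "\<phi> (1, v) \<in> B" using pb unfolding bij_betw_def by auto
    hence "f (\<phi> (1, v)) \<in> {1::nat} \<times> verts H" using fB by auto
    thus "f (\<phi> (1, v)) = (1, \<psi> v)" unfolding \<psi>_def by auto
  qed
  have imgS: "\<And>S. S \<subseteq> verts G \<Longrightarrow> f ` \<phi> ` ({1::nat} \<times> S) = {1::nat} \<times> \<psi> ` S"
  proof -
    fix S assume S: "S \<subseteq> verts G"
    have "f ` \<phi> ` ({1::nat} \<times> S) = (\<lambda>v. f (\<phi> (1, v))) ` S" by auto
    also have "\<dots> = (\<lambda>v. (1::nat, \<psi> v)) ` S" using fp S by (intro image_cong) auto
    also have "\<dots> = {1::nat} \<times> \<psi> ` S" by auto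
    finally show "f ` \<phi> ` ({1::nat} \<times> S) = {1::nat} \<times> \<psi> ` S" .
  qed
  have main: "\<And>S. S \<subseteq> verts G \<Longrightarrow> (S \<in> simplices (nbhd_complex G) \<longleftrightarrow> \<psi> ` S \<in> simplices (nbhd_complex H))"
  proof -
    fix S assume S: "S \<subseteq> verts G"
    have pS: "\<psi> ` S \<subseteq> verts H" using psb S unfolding bij_betw_def by auto
    have SA: "{1::nat} \<times> S \<subseteq> A" using S unfolding A_def by auto
    have PB: "\<phi> ` ({1::nat} \<times> S) \<subseteq> verts ?X" using pb SA BX unfolding bij_betw_def by auto
    have fin: "finite (\<psi> ` S) \<longleftrightarrow> finite S"
    proof -
      have "inj_on \<psi> (verts G)" using psb unfolding bij_betw_def by simp
      hence "inj_on \<psi> S" using S by (rule inj_on_subset)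
      thus ?thesis by (rule finite_image_iff)
    qed
    have "(\<exists>v\<in>verts G. S \<subseteq> nbhd G v) \<longleftrightarrow> CN ?X ({1::nat} \<times> S)" by (rule simp_CN[OF S])
    also have "\<dots> \<longleftrightarrow> CN ?X (\<phi> ` ({1::nat} \<times> S))" using pc SA by simp
    also have "\<dots> \<longleftrightarrow> CN ?Y (f ` \<phi> ` ({1::nat} \<times> S))" using iso_CN[OF fb fe PB] by simp
    also have "\<dots> \<longleftrightarrow> CN ?Y ({1::nat} \<times> \<psi> ` S)" using imgS[OF S] by simp
    also have "\<dots> \<longleftrightarrow> (\<exists>w\<in>verts H. \<psi> ` S \<subseteq> nbhd H w)" using simp_CN[OF pS] by simp
    finally show "S \<in> simplices (nbhd_complex G) \<longleftrightarrow> \<psi> ` S \<in> simplices (nbhd_complex H)"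
      unfolding simplices_nc using fin by simp
  qed
  show ?thesis unfolding complex_iso_def cverts_nc[OF nG] cverts_nc[OF nH]
    using psb main by blast
qed

theorem theorem1p1:
  fixes G :: "'a graph" and H :: "'b graph"
  assumes "is_graph G" and "is_graph H"
    and "no_isolated G" and "no_isolated H"
  shows "(graph_iso (tensor K2 G) (tensor K2 H) \<longrightarrow>
            complex_iso (nbhd_complex G) (nbhd_complex H))
       \<and> (locally_finite G \<and> locally_finite H \<and> stiff G \<and> stiff H \<longrightarrow>
            complex_iso (nbhd_complex G) (nbhd_complex H) \<longrightarrow>
            graph_iso (tensor K2 G) (tensor K2 H))"
  using part1[OF assms] part2[OF assms] by blast

end
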